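(* Let $C$ be a closed cone with nonempty interior $\operatorname{int} C$ in a real Banach space $X$. If $f:\operatorname{int} C\to\operatorname{int} C$ is nonexpansive with respect to Thompson's metric $d_T$, then for every $0<\alpha<1$ the map $\alpha f+(1-\alpha)\operatorname{id}$ is also nonexpansive on $(\operatorname{int} C,d_T)$.
   Context: A closed cone is a closed convex set $C\subset X$ with $\lambda C\subseteq C$ for all $\lambda\ge 0$ and $C\cap(-C)=\{0\}$. It induces the partial order $x\le y$ iff $y-x\in C$. For $x,y\in C$, $M(x/y)=\inf\{\beta>0: x\le \beta y\}$. For $x,y\in\operatorname{int} C$, Thompson's metric is $d_T(x,y)=\log\max\{M(x/y),M(y/x)\}=\log\inf\{\beta\ge 1:\beta^{-1}x\le y\le \beta x\}$. A map $g$ is $d_T$-nonexpansive if $d_T(g(x),g(y))\le d_T(x,y)$ for all $x,y$. *)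

theory Defs
  imports "HOL-Analysis.Analysis"
begin

definition closed_cone :: "'a::real_normed_vector set \<Rightarrow> bool" where
  "closed_cone C \<longleftrightarrow> closed C \<and> convex C \<and>
     (\<forall>c::real. \<forall>x\<in>C. c \<ge> 0 \<longrightarrow> c *\<^sub>R x \<in> C) \<and>
     C \<inter> uminus ` C = {0}"

definition cone_le :: "'a::real_normed_vector set \<Rightarrow> 'a \<Rightarrow> 'a \<Rightarrow> bool" where
  "cone_le C x y \<longleftrightarrow> y - x \<in> C"

definition coneM :: "'a::real_normed_vector set \<Rightarrow> 'a \<Rightarrow> 'a \<Rightarrow> real" where
  "coneM C x y = Inf {\<beta>::real. \<beta> > 0 \<and> cone_le C x (\<beta> *\<^sub>R y)}"

definition thompson :: "'a::real_normed_vector set \<Rightarrow> 'a \<Rightarrow> 'a \<Rightarrow> real" where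
  "thompson C x y = ln (max (coneM C x y) (coneM C y x))"

end

theory Submission
  imports Defs
begin

lemma cc_scale: "closed_cone C \<Longrightarrow> x \<in> C \<Longrightarrow> c \<ge> 0 \<Longrightarrow> c *\<^sub>R x \<in> C"
  unfolding closed_cone_def by blast

lemma cc_add: assumes "closed_cone C" "a \<in> C" "b \<in> C" shows "a + b \<in> C"
proof -
  have cv: "convex C" using assms(1) unfolding closed_cone_def by blast
  have "(1/2::real) *\<^sub>R a + (1/2::real) *\<^sub>R b \<in> C"
    using convexD[OF cv assms(2,3), of "1/2" "1/2"] by simp
  from cc_scale[OF assms(1) this, of 2] show ?thesis by (simp add: scaleR_add_right)
qed

lemma cc_anti: assumes "closed_cone C" "x \<in> C" "- x \<in> C" shows "x = 0"
proof -
  have "x \<in> C \<inter> uminus ` C" using assms(2,3) by (auto intro: image_eqI[of x uminus "-x"])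
  thus ?thesis using assms(1) unfolding closed_cone_def by blast
qed

lemma cc_nonempty:
  assumes "closed_cone C" "y \<in> interior C"
  shows "\<exists>\<beta>>0. cone_le C x (\<beta> *\<^sub>R y)"
proof -
  obtain r where r: "r > 0" "ball y r \<subseteq> C" using assms(2) by (meson mem_interior)
  define \<beta> where "\<beta> = 2 * norm x / r + 1"
  have "2 * norm x / r \<ge> 0" using r by simp
  then have bp: "\<beta> > 0" unfolding \<beta>_def by linarith
  have rb: "r * \<beta> = 2 * norm x + r" using r unfolding \<beta>_def by (simp add: field_simps)
  have "norm ((1/\<beta>) *\<^sub>R x) < r"
  proof -
    have "norm ((1/\<beta>) *\<^sub>R x) = norm x / \<beta>" using bp by simp
    also have "\<dots> < r"
    proof (cases "x = 0")
      case True then show ?thesis using r by simp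
    next
      case False
      have "norm x < r * \<beta>" using rb r norm_ge_zero[of x] by linarith
      then show ?thesis using bp by (simp add: divide_less_eq)
    qed
    finally show ?thesis .
  qed
  then have "y - (1/\<beta>) *\<^sub>R x \<in> ball y r" by (simp add: dist_norm)
  then have "y - (1/\<beta>) *\<^sub>R x \<in> C" using r by blast
  from cc_scale[OF assms(1) this, of \<beta>] bp
  have "\<beta> *\<^sub>R y - x \<in> C" by (simp add: scaleR_diff_right)
  then show ?thesis using bp unfolding cone_le_def by blast
qed

lemma cc_up:
  assumes "closed_cone C" "y \<in> C" "cone_le C x (\<beta> *\<^sub>R y)" "\<beta> \<le> \<beta>'"
  shows "cone_le C x (\<beta>' *\<^sub>R y)"
proof -
  have "(\<beta>' - \<beta>) *\<^sub>R y \<in> C" using cc_scale[OF assms(1,2)] assms(4) by simp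
  from cc_add[OF assms(1) this] assms(3)
  have "(\<beta>' - \<beta>) *\<^sub>R y + (\<beta> *\<^sub>R y - x) \<in> C" unfolding cone_le_def by blast
  thus ?thesis unfolding cone_le_def by (simp add: algebra_simps)
qed

lemma M_nonneg: assumes "closed_cone C" "y \<in> interior C" shows "coneM C x y \<ge> 0"
  unfolding coneM_def using cc_nonempty[OF assms, of x]
  by (intro cInf_greatest) auto

lemma M_less:
  assumes "closed_cone C" "y \<in> interior C" "\<beta> > coneM C x y"
  shows "cone_le C x (\<beta> *\<^sub>R y)"
proof -
  let ?S = "{\<beta>::real. \<beta> > 0 \<and> cone_le C x (\<beta> *\<^sub>R y)}"
  have ne: "?S \<noteq> {}" using cc_nonempty[OF assms(1,2), of x] by auto
  have bdd: "bdd_below ?S" by (rule bdd_belowI[of _ 0]) auto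
  obtain s where "s \<in> ?S" "s < \<beta>" using cInf_lessD[OF ne] assms(3) unfolding coneM_def by blast
  then show ?thesis using cc_up[OF assms(1) _ _, of y x s \<beta>] assms(2) interior_subset by fastforce
qed

lemma M_le:
  assumes "m \<ge> 0" "\<And>\<beta>. \<beta> > m \<Longrightarrow> cone_le C x (\<beta> *\<^sub>R y)"
  shows "coneM C x y \<le> m"
proof (rule ccontr)
  let ?S = "{\<beta>::real. \<beta> > 0 \<and> cone_le C x (\<beta> *\<^sub>R y)}"
  assume "\<not> coneM C x y \<le> m"
  then have h: "Inf ?S > m" unfolding coneM_def by simp
  define b where "b = (m + Inf ?S) / 2"
  have "b > m" "b < Inf ?S" using h unfolding b_def by auto
  then have "b \<in> ?S" using assms by auto
  have bdd: "bdd_below ?S" by (rule bdd_belowI[of _ 0]) auto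
  have "Inf ?S \<le> b" by (rule cInf_lower[OF \<open>b \<in> ?S\<close> bdd])
  then show False using \<open>b < Inf ?S\<close> by simp
qed

lemma max_ge1:
  assumes "closed_cone C" "0 \<notin> interior C" "x \<in> interior C" "y \<in> interior C"
  shows "max (coneM C x y) (coneM C y x) \<ge> 1"
proof (rule ccontr)
  assume "\<not> ?thesis"
  then have a: "coneM C x y < 1" "coneM C y x < 1" by auto
  obtain b where b: "b < 1" "b > coneM C x y" "b > 0"
    using a M_nonneg[OF assms(1,4), of x] by (metis dense le_less_trans max.strict_boundedE
        max_less_iff_conj order_le_less_trans zero_less_one less_max_iff_disj) 
  obtain c where c: "c < 1" "c > coneM C y x" "c > 0"
    using a M_nonneg[OF assms(1,3), of y] by (metis dense le_less_trans order_le_less_trans zero_less_one)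
  have xC: "x \<in> C" and yC: "y \<in> C" using assms interior_subset by blast+
  have "b*c < b*1" by (rule mult_strict_left_mono) (use b c in auto)
  then have bc1: "b*c < 1" using b by linarith
  have 1: "b *\<^sub>R y - x \<in> C" using M_less[OF assms(1,4) b(2)] unfolding cone_le_def .
  have 2: "c *\<^sub>R x - y \<in> C" using M_less[OF assms(1,3) c(2)] unfolding cone_le_def .
  have "b *\<^sub>R (c *\<^sub>R x - y) \<in> C" using cc_scale[OF assms(1) 2] b by simp
  from cc_add[OF assms(1) this 1] have "(b*c) *\<^sub>R x - x \<in> C" by (simp add: algebra_simps)
  then have "(1/(1 - b*c)) *\<^sub>R ((b*c) *\<^sub>R x - x) \<in> C"
    using cc_scale[OF assms(1)] bc1 by simp
  moreover have "(1/(1 - b*c)) *\<^sub>R ((b*c) *\<^sub>R x - x) = - x"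
  proof -
    have "b*c < 1" using bc1 .
    then have eq: "(b*c) *\<^sub>R x - x = (-(1 - b*c)) *\<^sub>R x" by (simp add: algebra_simps)
    have s: "(1/(1-b*c)) * (-(1-b*c)) = -1" using bc1 by (simp add: field_simps)
    show ?thesis unfolding eq scaleR_scaleR s by simp
  qed
  ultimately have "-x \<in> C" by simp
  then have "x = 0" using cc_anti[OF assms(1) xC] by blast
  then show False using assms(2,3) by simp
qed

lemma zero_interior_trivial:
  assumes "closed_cone (C::'a::real_normed_vector set)" "0 \<in> interior C"
  shows "(v::'a::real_normed_vector) = 0"
proof -
  obtain r where r: "r > 0" "ball 0 r \<subseteq> C" using assms(2) by (meson mem_interior)
  define t where "t = r / (2 * (norm v + 1))"
  have tp: "t > 0" unfolding t_def using r by (simp add: add_nonneg_pos)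
  have "norm (t *\<^sub>R v) < r"
  proof -
    have "norm (t *\<^sub>R v) = t * norm v" using tp by simp
    also have "\<dots> \<le> t * (norm v + 1)" using tp by simp
    also have "\<dots> = r / 2"
    proof -
      have "norm v + 1 > 0" by (simp add: add_nonneg_pos)
      then show ?thesis unfolding t_def by (simp add: field_simps)
    qed
    finally show ?thesis using r by simp
  qed
  then have "t *\<^sub>R v \<in> C" "- (t *\<^sub>R v) \<in> C" using r by (auto simp: dist_norm)
  then have "t *\<^sub>R v = 0" using cc_anti[OF assms(1)] by blast
  then show ?thesis using tp by simp
qed

theorem lemma2p1:
  fixes C :: "'a::banach set" and f :: "'a \<Rightarrow> 'a" and \<alpha> :: real
  assumes "closed_cone C"
    and "interior C \<noteq> {}"
    and "f ` interior C \<subseteq> interior C"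
    and "\<forall>x\<in>interior C. \<forall>y\<in>interior C. thompson C (f x) (f y) \<le> thompson C x y"
    and "0 < \<alpha>" and "\<alpha> < 1"
  shows "\<forall>x\<in>interior C. \<forall>y\<in>interior C.
           thompson C (\<alpha> *\<^sub>R f x + (1 - \<alpha>) *\<^sub>R x) (\<alpha> *\<^sub>R f y + (1 - \<alpha>) *\<^sub>R y)
             \<le> thompson C x y"
proof (cases "0 \<in> interior C")
  case True
  have "\<And>v::'a. v = 0" using zero_interior_trivial[OF assms(1) True] .
  then show ?thesis by (metis order_refl)
next
  case False
  note cc = assms(1)
  show ?thesis
  proof (intro ballI)
    fix x y assume x: "x \<in> interior C" and y: "y \<in> interior C"
    have fx: "f x \<in> interior C" and fy: "f y \<in> interior C" using assms(3) x y by auto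
    define m where "m = max (coneM C x y) (coneM C y x)"
    define mf where "mf = max (coneM C (f x) (f y)) (coneM C (f y) (f x))"
    have m1: "m \<ge> 1" unfolding m_def using max_ge1[OF cc False x y] .
    have mf1: "mf \<ge> 1" unfolding mf_def using max_ge1[OF cc False fx fy] .
    have "ln mf \<le> ln m" using assms(4) x y unfolding thompson_def m_def mf_def by blast
    then have mfm: "mf \<le> m" using m1 mf1 by simp
    define gx where "gx = \<alpha> *\<^sub>R f x + (1 - \<alpha>) *\<^sub>R x"
    define gy where "gy = \<alpha> *\<^sub>R f y + (1 - \<alpha>) *\<^sub>R y"
    have key: "cone_le C u (\<beta> *\<^sub>R v) \<and> cone_le C (f u) (\<beta> *\<^sub>R f v) \<Longrightarrow>
        cone_le C (\<alpha> *\<^sub>R f u + (1 - \<alpha>) *\<^sub>R u) (\<beta> *\<^sub>R (\<alpha> *\<^sub>R f v + (1 - \<alpha>) *\<^sub>R v))"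
      for u v \<beta>
    proof -
      assume h: "cone_le C u (\<beta> *\<^sub>R v) \<and> cone_le C (f u) (\<beta> *\<^sub>R f v)"
      have a1: "\<alpha> *\<^sub>R (\<beta> *\<^sub>R f v - f u) \<in> C"
        using cc_scale[OF cc, of "\<beta> *\<^sub>R f v - f u" \<alpha>] h assms(5) unfolding cone_le_def by simp
      have a2: "(1-\<alpha>) *\<^sub>R (\<beta> *\<^sub>R v - u) \<in> C"
        using cc_scale[OF cc, of "\<beta> *\<^sub>R v - u" "1-\<alpha>"] h assms(6) unfolding cone_le_def by simp
      from cc_add[OF cc a1 a2] show ?thesis unfolding cone_le_def by (simp add: algebra_simps)
    qed
    have G1: "cone_le C gx (\<beta> *\<^sub>R gy)" if b: "\<beta> > m" for \<beta>
    proof -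
      have "cone_le C x (\<beta> *\<^sub>R y)" using M_less[OF cc y] b unfolding m_def by simp
      moreover have "cone_le C (f x) (\<beta> *\<^sub>R f y)" using M_less[OF cc fy] b mfm unfolding mf_def by simp
      ultimately show "cone_le C gx (\<beta> *\<^sub>R gy)" unfolding gx_def gy_def using key by blast
    qed
    have G2: "cone_le C gy (\<beta> *\<^sub>R gx)" if b: "\<beta> > m" for \<beta>
    proof -
      have "cone_le C y (\<beta> *\<^sub>R x)" using M_less[OF cc x] b unfolding m_def by simp
      moreover have "cone_le C (f y) (\<beta> *\<^sub>R f x)" using M_less[OF cc fx] b mfm unfolding mf_def by simp
      ultimately show "cone_le C gy (\<beta> *\<^sub>R gx)" unfolding gx_def gy_def using key by blast
    qed
    have "coneM C gx gy \<le> m" by (rule M_le) (use G1 m1 in auto)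
    moreover have "coneM C gy gx \<le> m" by (rule M_le) (use G2 m1 in auto)
    ultimately have le: "max (coneM C gx gy) (coneM C gy gx) \<le> m" by simp
    have "ln (max (coneM C gx gy) (coneM C gy gx)) \<le> ln m"
    proof (cases "max (coneM C gx gy) (coneM C gy gx) > 0")
      case True then show ?thesis using le by (rule ln_mono[rotated])
    next
      case False
      have ne: "{\<beta>::real. \<beta> > 0 \<and> cone_le C gx (\<beta> *\<^sub>R gy)} \<noteq> {}"
        using G1[of "m+1"] m1 by (intro ex_in_conv[THEN iffD1] exI[of _ "m+1"]) auto
      have "coneM C gx gy \<ge> 0" unfolding coneM_def
        by (rule cInf_greatest[OF ne]) auto
      then have "max (coneM C gx gy) (coneM C gy gx) = 0" using False by simp
      then have "ln (max (coneM C gx gy) (coneM C gy gx)) = 0"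
        by simp
      then show ?thesis using m1 by simp
    qed
    then show "thompson C gx gy \<le> thompson C x y" unfolding thompson_def m_def .
  qed
qed

end
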